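(* Let $R$ be a commutative ring with unit, $\mathcal{P}$ a poset satisfying the descending chain condition, $i\in\mathcal{P}$, and $F\colon\mathcal{P}\to R\text{-mod}$ a functor which is pseudo-projective at $i$. Let $x=\oplus_{j<i}x_j\in\bigoplus_{j<i}F(j)$ satisfy $\sum_{j<i}F(j<i)(x_j)=0$. Then there is a sequence $\{x^n\}_{n\ge0}$, $x^n=\oplus_{j<i}x^n_j\in\bigoplus_{j<i}F(j)$, with $x^0=x$, such that for every $n\ge0$: $\sum_{j<i}F(j<i)(x^n_j)=0$; $x^{n+1}-x^n=\sum_{k<j,\ j\in\max\operatorname{supp}(x^n)}\big(y_{k,j}\oplus -F(k<j)(y_{k,j})\big)$ for some elements $y_{k,j}\in F(k)$ (with $y_{k,j}$ placed in the summand $F(k)$ and $-F(k<j)(y_{k,j})$ in the summand $F(j)$); $[x^{n+1}]=[x^n]$ in $\operatorname{colim}_{\mathcal{P}_{<i}}F$; and $\operatorname{supp}(x^{n+1})<\operatorname{supp}(x^n)$. In addition, there exists $N>0$ such that $x^n_j=0$ for all $j<i$ whenever $n\ge N$.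
   Context: DCC: no infinite strictly descending chains. $F(j<i)$ is the image of the arrow $j\to i$, $F(i<i)=1$. For $x=\oplus_j x_j$, $\operatorname{supp}(x)=\{j: x_j\ne0\}$; $[x]$ is the class of $x$ in the colimit. For subsets $I,J$ of $\mathcal{P}$, $J<I$ means every element of $J$ is strictly smaller than some element of $I$. $\max J$ is the set of maximal elements of $J$. $\operatorname{Im}_F(j)=\sum_{k<j}\operatorname{Im}F(k<j)$. $F$ is pseudo-projective at $i$ if for every finite $J\subset\mathcal{P}_{\le i}$ and every $\oplus_{j\in J}x_j\in\bigoplus_{j\in J}F(j)$ with $\sum_{j\in J}F(j<i)(x_j)=0$, one has $x_j\in\operatorname{Im}_F(j)$ for all $j\in\max J$. *)

theory Defs
  imports Main "HOL.Modules"
begin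

text \<open>All modules F j are
  modelled as submodules of one ambient R-module 'm (with scalar multiplication s);
  Fm j i is the image of the arrow j \<le> i, a linear map F j \<rightarrow> F i.\<close>

definition is_functor ::
  "('r::comm_ring_1 \<Rightarrow> 'm::ab_group_add \<Rightarrow> 'm) \<Rightarrow> ('p::order \<Rightarrow> 'm set) \<Rightarrow> ('p \<Rightarrow> 'p \<Rightarrow> 'm \<Rightarrow> 'm) \<Rightarrow> bool" where
  "is_functor s F Fm \<longleftrightarrow>
     module s \<and> (\<forall>j. module.subspace s (F j)) \<and>
     (\<forall>j i. j \<le> i \<longrightarrow>
        (\<forall>v\<in>F j. Fm j i v \<in> F i) \<and>
        (\<forall>v\<in>F j. \<forall>w\<in>F j. Fm j i (v + w) = Fm j i v + Fm j i w) \<and>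
        (\<forall>r. \<forall>v\<in>F j. Fm j i (s r v) = s r (Fm j i v))) \<and>
     (\<forall>i. \<forall>v\<in>F i. Fm i i v = v) \<and>
     (\<forall>k j i. k \<le> j \<longrightarrow> j \<le> i \<longrightarrow> (\<forall>v\<in>F k. Fm j i (Fm k j v) = Fm k i v))"

definition maxs :: "'p::order set \<Rightarrow> 'p set" where
  "maxs J = {j\<in>J. \<not> (\<exists>j'\<in>J. j < j')}"

definition set_less :: "'p::order set \<Rightarrow> 'p set \<Rightarrow> bool" where
  "set_less J I \<longleftrightarrow> (\<forall>j\<in>J. \<exists>i\<in>I. j < i)"

definition ImF :: "('p::order \<Rightarrow> 'm::ab_group_add set) \<Rightarrow> ('p \<Rightarrow> 'p \<Rightarrow> 'm \<Rightarrow> 'm) \<Rightarrow> 'p \<Rightarrow> 'm set" where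
  "ImF F Fm j = {(\<Sum>k\<in>K. Fm k j (y k)) | K y. finite K \<and> K \<subseteq> {k. k < j} \<and> (\<forall>k\<in>K. y k \<in> F k)}"

definition pseudo_projective ::
  "('p::order \<Rightarrow> 'm::ab_group_add set) \<Rightarrow> ('p \<Rightarrow> 'p \<Rightarrow> 'm \<Rightarrow> 'm) \<Rightarrow> 'p \<Rightarrow> bool" where
  "pseudo_projective F Fm i \<longleftrightarrow>
     (\<forall>J x. finite J \<longrightarrow> J \<subseteq> {j. j \<le> i} \<longrightarrow> (\<forall>j\<in>J. x j \<in> F j) \<longrightarrow>
        (\<Sum>j\<in>J. Fm j i (x j)) = 0 \<longrightarrow> (\<forall>j\<in>maxs J. x j \<in> ImF F Fm j))"

definition dsum :: "('p::order \<Rightarrow> 'm::zero set) \<Rightarrow> 'p \<Rightarrow> ('p \<Rightarrow> 'm) \<Rightarrow> bool" where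
  "dsum F i x \<longleftrightarrow> (\<forall>j. j < i \<longrightarrow> x j \<in> F j) \<and> (\<forall>j. \<not> j < i \<longrightarrow> x j = 0) \<and> finite {j. x j \<noteq> 0}"

definition supp :: "('p \<Rightarrow> 'm::zero) \<Rightarrow> 'p set" where
  "supp x = {j. x j \<noteq> 0}"

text \<open>The element y \<oplus> -F(k<j)(y) of the direct sum (y in summand k, -F(k<j) y in summand j).\<close>
definition gen :: "('p \<Rightarrow> 'p \<Rightarrow> 'm::ab_group_add \<Rightarrow> 'm) \<Rightarrow> 'p \<Rightarrow> 'p \<Rightarrow> 'm \<Rightarrow> 'p \<Rightarrow> 'm" where
  "gen Fm k j v = (\<lambda>l. (if l = k then v else 0) - (if l = j then Fm k j v else 0))"

text \<open>[x] = [x'] in colim_{P_{<i}} F, the colimit realised as the quotient of the direct sum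
  by the submodule generated by the elements gen k j y with k < j < i, y \<in> F k
  (this submodule consists exactly of the finite sums of such elements).\<close>
definition colim_eq ::
  "('p::order \<Rightarrow> 'm::ab_group_add set) \<Rightarrow> ('p \<Rightarrow> 'p \<Rightarrow> 'm \<Rightarrow> 'm) \<Rightarrow> 'p \<Rightarrow> ('p \<Rightarrow> 'm) \<Rightarrow> ('p \<Rightarrow> 'm) \<Rightarrow> bool" where
  "colim_eq F Fm i x x' \<longleftrightarrow>
     (\<exists>K y. finite K \<and> (\<forall>(k,j)\<in>K. k < j \<and> j < i \<and> y k j \<in> F k) \<and>
        (\<forall>l. x' l - x l = (\<Sum>(k,j)\<in>K. gen Fm k j (y k j) l)))"

end

theory Submission
  imports Defs "HOL-Library.Multiset"
begin

lemma isf_parts: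
  assumes "is_functor s F Fm"
  shows isf_mod: "module s" and isf_sub: "module.subspace s (F j)"
    and isf_arr: "\<forall>j i. j \<le> i \<longrightarrow>
        (\<forall>v\<in>F j. Fm j i v \<in> F i) \<and>
        (\<forall>v\<in>F j. \<forall>w\<in>F j. Fm j i (v + w) = Fm j i v + Fm j i w) \<and>
        (\<forall>r. \<forall>v\<in>F j. Fm j i (s r v) = s r (Fm j i v))"
    and isf_comp: "\<forall>k j i. k \<le> j \<longrightarrow> j \<le> i \<longrightarrow> (\<forall>v\<in>F k. Fm j i (Fm k j v) = Fm k i v)"
proof -
  note H = assms[unfolded is_functor_def]
  show "module s" by (rule conjunct1[OF H])
  show "module.subspace s (F j)" using conjunct1[OF conjunct2[OF H]] by (rule spec)
  show "\<forall>j i. j \<le> i \<longrightarrow>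
        (\<forall>v\<in>F j. Fm j i v \<in> F i) \<and>
        (\<forall>v\<in>F j. \<forall>w\<in>F j. Fm j i (v + w) = Fm j i v + Fm j i w) \<and>
        (\<forall>r. \<forall>v\<in>F j. Fm j i (s r v) = s r (Fm j i v))"
    by (rule conjunct1[OF conjunct2[OF conjunct2[OF H]]])
  show "\<forall>k j i. k \<le> j \<longrightarrow> j \<le> i \<longrightarrow> (\<forall>v\<in>F k. Fm j i (Fm k j v) = Fm k i v)"
    by (rule conjunct2[OF conjunct2[OF conjunct2[OF conjunct2[OF H]]]])
qed

lemma F_0: "is_functor s F Fm \<Longrightarrow> 0 \<in> F j"
  by (rule module.subspace_0[OF isf_mod isf_sub])

lemma F_add: "is_functor s F Fm \<Longrightarrow> a \<in> F j \<Longrightarrow> b \<in> F j \<Longrightarrow> a + b \<in> F j"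
  by (rule module.subspace_add[OF isf_mod isf_sub])

lemma F_diff: "is_functor s F Fm \<Longrightarrow> a \<in> F j \<Longrightarrow> b \<in> F j \<Longrightarrow> a - b \<in> F j"
  by (rule module.subspace_diff[OF isf_mod isf_sub])

lemma F_sum: "is_functor s F Fm \<Longrightarrow> (\<And>a. a \<in> A \<Longrightarrow> f a \<in> F j) \<Longrightarrow> sum f A \<in> F j"
  by (rule module.subspace_sum[OF isf_mod isf_sub])

lemma Fm_in: "is_functor s F Fm \<Longrightarrow> j \<le> i \<Longrightarrow> a \<in> F j \<Longrightarrow> Fm j i a \<in> F i"
proof -
  assume f: "is_functor s F Fm" and ji: "j \<le> i" and a: "a \<in> F j"
  have "\<forall>v\<in>F j. Fm j i v \<in> F i" using isf_arr[OF f] ji by blast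
  then show ?thesis using a by blast
qed

lemma Fm_add: "is_functor s F Fm \<Longrightarrow> j \<le> i \<Longrightarrow> a \<in> F j \<Longrightarrow> b \<in> F j \<Longrightarrow> Fm j i (a + b) = Fm j i a + Fm j i b"
proof -
  assume f: "is_functor s F Fm" and ji: "j \<le> i" and a: "a \<in> F j" and b: "b \<in> F j"
  have "\<forall>v\<in>F j. \<forall>w\<in>F j. Fm j i (v + w) = Fm j i v + Fm j i w" using isf_arr[OF f] ji by blast
  then show ?thesis using a b by blast
qed

lemma Fm_comp: "is_functor s F Fm \<Longrightarrow> k \<le> j \<Longrightarrow> j \<le> i \<Longrightarrow> a \<in> F k \<Longrightarrow> Fm j i (Fm k j a) = Fm k i a"
  using isf_comp by blast

lemma Fm_0: "is_functor s F Fm \<Longrightarrow> j \<le> i \<Longrightarrow> Fm j i 0 = 0"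
  using Fm_add[of s F Fm j i 0 0] F_0[of s F Fm j] by simp

lemma Fm_diff: "is_functor s F Fm \<Longrightarrow> j \<le> i \<Longrightarrow> a \<in> F j \<Longrightarrow> b \<in> F j \<Longrightarrow> Fm j i (a - b) = Fm j i a - Fm j i b"
  using Fm_add[of s F Fm j i "a - b" b] F_diff[of s F Fm a j b] by (simp add: eq_diff_eq)

lemma Fm_neg: "is_functor s F Fm \<Longrightarrow> j \<le> i \<Longrightarrow> a \<in> F j \<Longrightarrow> Fm j i (- a) = - Fm j i a"
  using Fm_diff[of s F Fm j i 0 a] F_0[of s F Fm j] Fm_0[of s F Fm j i] by simp

lemma Fm_sum: assumes "is_functor s F Fm" "j \<le> i" "finite A" "\<And>a. a \<in> A \<Longrightarrow> f a \<in> F j"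
  shows "Fm j i (sum f A) = (\<Sum>a\<in>A. Fm j i (f a))"
  using assms(3,4)
proof (induction A rule: finite_induct)
  case empty then show ?case using Fm_0 assms by simp
next
  case (insert a A)
  then show ?case using Fm_add[of s F Fm j i "f a" "sum f A"] F_sum[of s F Fm A f j] assms by simp
qed

definition TT :: "('p \<Rightarrow> 'p \<Rightarrow> 'm::ab_group_add \<Rightarrow> 'm) \<Rightarrow> 'p \<Rightarrow> 'p set \<Rightarrow> ('p \<Rightarrow> 'm) \<Rightarrow> 'm" where
  "TT Fm i S z = (\<Sum>j\<in>S. Fm j i (z j))"

lemma gen_in: assumes f: "is_functor s F Fm" and kj: "k < j" and v: "v \<in> F k"
  shows "gen Fm k j v l \<in> F l"
proof -
  have a: "(if l = k then v else 0) \<in> F l" using v F_0[OF f] by simp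
  have b: "(if l = j then Fm k j v else 0) \<in> F l"
    using Fm_in[OF f _ v, of j] kj F_0[OF f] by (simp add: less_imp_le)
  show ?thesis unfolding gen_def by (rule F_diff[OF f a b])
qed

lemma TT_gen:
  assumes f: "is_functor s F Fm" and kj: "k < j" "j \<le> i" and S: "finite S" "k \<in> S" "j \<in> S"
    "\<forall>l\<in>S. l \<le> i" and v: "v \<in> F k"
  shows "TT Fm i S (gen Fm k j v) = 0"
proof -
  have "\<And>l. l \<in> S \<Longrightarrow> Fm l i (gen Fm k j v l) =
     (if l = k then Fm k i v else 0) - (if l = j then Fm j i (Fm k j v) else 0)"
  proof -
    fix l assume l: "l \<in> S"
    show "Fm l i (gen Fm k j v l) =
     (if l = k then Fm k i v else 0) - (if l = j then Fm j i (Fm k j v) else 0)"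
      using kj v Fm_0[OF f, of l i] S(4) l Fm_neg[OF f, of j i "Fm k j v"] Fm_in[OF f, of k j v]
      by (auto simp: gen_def less_imp_le)
  qed
  then have "TT Fm i S (gen Fm k j v) = (\<Sum>l\<in>S. (if l = k then Fm k i v else 0) - (if l = j then Fm j i (Fm k j v) else 0))"
    unfolding TT_def by (rule sum.cong[OF refl])
  also have "\<dots> = Fm k i v - Fm j i (Fm k j v)"
    using S by (simp add: sum_subtractf)
  also have "\<dots> = 0" using Fm_comp[OF f, of k j i v] kj v by simp
  finally show ?thesis .
qed

lemma TT_add:
  assumes f: "is_functor s F Fm" and S: "\<forall>l\<in>S. l \<le> i"
    and z: "\<forall>l\<in>S. z l \<in> F l" and w: "\<forall>l\<in>S. w l \<in> F l"
  shows "TT Fm i S (\<lambda>l. z l + w l) = TT Fm i S z + TT Fm i S w"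
  unfolding TT_def using Fm_add[OF f] S z w by (simp add: sum.distrib)

lemma TT_sum:
  assumes f: "is_functor s F Fm" and S: "\<forall>l\<in>S. l \<le> i" and K: "finite K"
    and g: "\<forall>p\<in>K. \<forall>l\<in>S. g p l \<in> F l"
  shows "TT Fm i S (\<lambda>l. \<Sum>p\<in>K. g p l) = (\<Sum>p\<in>K. TT Fm i S (g p))"
proof -
  have "TT Fm i S (\<lambda>l. \<Sum>p\<in>K. g p l) = (\<Sum>l\<in>S. \<Sum>p\<in>K. Fm l i (g p l))"
    unfolding TT_def using Fm_sum[OF f _ K] S g by (intro sum.cong) auto
  also have "\<dots> = (\<Sum>p\<in>K. TT Fm i S (g p))" unfolding TT_def by (rule sum.swap)
  finally show ?thesis .
qed

lemma TT_supp:
  assumes f: "is_functor s F Fm" and S: "finite S" "supp z \<subseteq> S" "\<forall>l\<in>S. l \<le> i"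
  shows "(\<Sum>j\<in>supp z. Fm j i (z j)) = TT Fm i S z"
  unfolding TT_def
  by (rule sum.mono_neutral_left) (use S Fm_0[OF f] in \<open>auto simp: supp_def\<close>)



lemma gen_zero: "l \<noteq> k \<Longrightarrow> l \<noteq> j \<Longrightarrow> gen Fm k j v l = 0"
  by (simp add: gen_def)

lemma step:
  assumes f: "is_functor s F Fm" and pp: "pseudo_projective F Fm i"
    and x: "dsum F i x" and x0: "(\<Sum>j\<in>supp x. Fm j i (x j)) = 0"
  shows "\<exists>x'. dsum F i x' \<and> (\<Sum>j\<in>supp x'. Fm j i (x' j)) = 0 \<and>
     (\<exists>K y. finite K \<and>
            (\<forall>(k,j)\<in>K. j \<in> maxs (supp x) \<and> k < j \<and> y k j \<in> F k) \<and>
            (\<forall>l. x' l - x l = (\<Sum>(k,j)\<in>K. gen Fm k j (y k j) l))) \<and>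
     colim_eq F Fm i x x' \<and> set_less (supp x') (supp x)"
proof -
  define J where "J = supp x"
  have finJ: "finite J" using x unfolding J_def dsum_def supp_def by simp
  have Ji: "\<forall>j\<in>J. j < i" using x unfolding J_def dsum_def supp_def by auto
  have xF: "\<forall>j. x j \<in> F j"
  proof
    fix j show "x j \<in> F j" using x F_0[OF f, of j] unfolding dsum_def by (cases "j < i") simp_all
  qed
  have mJ: "maxs J \<subseteq> J" unfolding maxs_def by auto
  have Jsub: "J \<subseteq> {j. j \<le> i}" using Ji by (auto intro: less_imp_le)
  have xJ: "\<forall>j\<in>J. x j \<in> F j" using xF by simp
  have xJ0: "(\<Sum>j\<in>J. Fm j i (x j)) = 0" using x0 unfolding J_def .
  have Im: "\<forall>j\<in>maxs J. x j \<in> ImF F Fm j"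
  proof
    fix j assume "j \<in> maxs J"
    then show "x j \<in> ImF F Fm j"
    proof -
      have "finite J \<longrightarrow> J \<subseteq> {j. j \<le> i} \<longrightarrow> (\<forall>j\<in>J. x j \<in> F j) \<longrightarrow>
        (\<Sum>j\<in>J. Fm j i (x j)) = 0 \<longrightarrow> (\<forall>j\<in>maxs J. x j \<in> ImF F Fm j)"
        using pp unfolding pseudo_projective_def by (erule_tac x=J in allE, erule_tac x=x in allE)
      then show ?thesis using finJ Jsub xJ xJ0 \<open>j \<in> maxs J\<close> by blast
    qed
  qed
  have "\<forall>j\<in>maxs J. \<exists>p. finite (fst p) \<and> fst p \<subseteq> {k. k<j} \<and> (\<forall>k\<in>fst p. snd p k \<in> F k) \<and>
      x j = (\<Sum>k\<in>fst p. Fm k j (snd p k))"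
  proof
    fix j assume "j \<in> maxs J"
    then obtain K0 y0 where "x j = (\<Sum>k\<in>K0. Fm k j (y0 k))" "finite K0" "K0 \<subseteq> {k. k < j}"
       "\<forall>k\<in>K0. y0 k \<in> F k"
      using Im unfolding ImF_def by blast
    then show "\<exists>p. finite (fst p) \<and> fst p \<subseteq> {k. k<j} \<and> (\<forall>k\<in>fst p. snd p k \<in> F k) \<and>
      x j = (\<Sum>k\<in>fst p. Fm k j (snd p k))"
      by (intro exI[of _ "(K0, y0)"]) simp
  qed
  then have "\<exists>P. \<forall>j\<in>maxs J. finite (fst (P j)) \<and> fst (P j) \<subseteq> {k. k<j} \<and>
     (\<forall>k\<in>fst (P j). snd (P j) k \<in> F k) \<and> x j = (\<Sum>k\<in>fst (P j). Fm k j (snd (P j) k))"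
    by (rule bchoice)
  then obtain P where P: "\<forall>j\<in>maxs J. finite (fst (P j)) \<and> fst (P j) \<subseteq> {k. k<j} \<and>
     (\<forall>k\<in>fst (P j). snd (P j) k \<in> F k) \<and> x j = (\<Sum>k\<in>fst (P j). Fm k j (snd (P j) k))" ..
  define Kj where "Kj j = fst (P j)" for j
  define yj where "yj j = snd (P j)" for j
  have Kjfin: "\<forall>j\<in>maxs J. finite (Kj j)" and Kjlt: "\<forall>j\<in>maxs J. \<forall>k\<in>Kj j. k < j"
    and yjF: "\<forall>j\<in>maxs J. \<forall>k\<in>Kj j. yj j k \<in> F k"
    and xj: "\<forall>j\<in>maxs J. x j = (\<Sum>k\<in>Kj j. Fm k j (yj j k))"
    using P unfolding Kj_def yj_def by auto
  define K where "K = (\<lambda>(j,k). (k,j)) ` (SIGMA j:maxs J. Kj j)"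
  define y where "y k j = yj j k" for k j
  define x' where "x' l = x l + (\<Sum>(k,j)\<in>K. gen Fm k j (y k j) l)" for l
  have finmJ: "finite (maxs J)" using finJ mJ finite_subset by blast
  have finK: "finite K" unfolding K_def using finmJ Kjfin by auto
  have Kprop: "\<forall>(k,j)\<in>K. j \<in> maxs J \<and> k < j \<and> y k j \<in> F k"
  proof
    fix p assume "p \<in> K"
    then obtain q where q: "q \<in> Sigma (maxs J) Kj" "p = (\<lambda>(j,k). (k,j)) q" unfolding K_def by blast
    obtain j k where qjk: "q = (j,k)" by (cases q)
    have jk: "j \<in> maxs J" "k \<in> Kj j" "p = (k,j)" using q qjk by auto
    then show "case p of (k,j) \<Rightarrow> j \<in> maxs J \<and> k < j \<and> y k j \<in> F k"
      using Kjlt yjF unfolding y_def by simp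
  qed
  have Kprop2: "\<forall>(k,j)\<in>K. k < i \<and> j < i \<and> j \<in> J"
  proof
    fix p assume "p \<in> K"
    then obtain k j where p: "p = (k,j)" "j \<in> maxs J" "k < j" using Kprop by fastforce
    then have "j \<in> J" using mJ by blast
    then have "j < i" using Ji by blast
    then show "case p of (k,j) \<Rightarrow> k < i \<and> j < i \<and> j \<in> J"
      using p `j \<in> J` by (auto intro: order.strict_trans)
  qed
  have diff: "\<forall>l. x' l - x l = (\<Sum>(k,j)\<in>K. gen Fm k j (y k j) l)"
    unfolding x'_def by simp
  have colim: "colim_eq F Fm i x x'"
    unfolding colim_eq_def
  proof (intro exI[of _ K] exI[of _ y] conjI finK diff)
    show "\<forall>(k,j)\<in>K. k < j \<and> j < i \<and> y k j \<in> F k" using Kprop Kprop2 by auto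
  qed
  define S where "S = J \<union> fst ` K"
  have finS: "finite S" unfolding S_def using finJ finK by simp
  have Si: "\<forall>l\<in>S. l < i" unfolding S_def using Ji Kprop2 by auto
  have Sle: "\<forall>l\<in>S. l \<le> i" using Si less_imp_le by blast
  have out: "x' l = 0" if "l \<notin> S" for l
  proof -
    have "x l = 0" using that unfolding S_def J_def supp_def by auto
    moreover have "(\<Sum>(k,j)\<in>K. gen Fm k j (y k j) l) = 0"
    proof (rule sum.neutral, clarify)
      fix k j assume "(k,j) \<in> K"
      then have "l \<noteq> k" "l \<noteq> j" using that Kprop2 unfolding S_def by force+
      then show "gen Fm k j (y k j) l = 0" by (rule gen_zero)
    qed
    ultimately show ?thesis unfolding x'_def by simp
  qed
  have suppS: "supp x' \<subseteq> S" using out unfolding supp_def by blast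
  have x'F: "x' l \<in> F l" for l
    unfolding x'_def using Kprop
    by (intro F_add[OF f] F_sum[OF f]) (auto simp: xF intro!: gen_in[OF f])
  have dsum': "dsum F i x'"
    unfolding dsum_def
  proof (intro conjI allI impI)
    show "finite {j. x' j \<noteq> 0}" using finite_subset[OF suppS finS] unfolding supp_def .
    fix j assume "\<not> j < i" then show "x' j = 0" using out Si by blast
  qed (rule x'F)
  define g where "g p l = (case p of (k,j) \<Rightarrow> gen Fm k j (y k j) l)" for p l
  have x'g: "x' = (\<lambda>l. x l + (\<Sum>p\<in>K. g p l))"
    unfolding x'_def g_def by (auto simp: case_prod_unfold)
  have gF: "\<forall>p\<in>K. \<forall>l\<in>S. g p l \<in> F l"
    using Kprop unfolding g_def by (auto intro!: gen_in[OF f])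
  have TTx: "TT Fm i S x = 0"
    using TT_supp[OF f finS _ Sle, of x] x0 unfolding S_def J_def by auto
  have TTg: "TT Fm i S (g p) = 0" if "p \<in> K" for p
  proof -
    obtain k j where p: "p = (k,j)" by fastforce
    have "g p = gen Fm k j (y k j)" unfolding g_def p by auto
    moreover have "TT Fm i S (gen Fm k j (y k j)) = 0"
      using that p Kprop Kprop2 finS Sle unfolding S_def
      by (intro TT_gen[OF f]) (auto intro: less_imp_le rev_image_eqI)
    ultimately show ?thesis by simp
  qed
  have "TT Fm i S x' = TT Fm i S x + TT Fm i S (\<lambda>l. \<Sum>p\<in>K. g p l)"
    unfolding x'g using xF gF
    by (intro TT_add[OF f Sle]) (auto intro!: F_sum[OF f])
  also have "\<dots> = 0"
    using TTx TTg TT_sum[OF f Sle finK gF] by simp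
  finally have sum0: "(\<Sum>j\<in>supp x'. Fm j i (x' j)) = 0"
    using TT_supp[OF f finS suppS Sle] by simp
  have sl: "set_less (supp x') (supp x)"
    unfolding set_less_def J_def[symmetric]
  proof
    fix l assume l: "l \<in> supp x'"
    show "\<exists>j\<in>J. l < j"
    proof (cases "l \<in> fst ` K")
      case True
      then obtain p where p: "p \<in> K" "l = fst p" by blast
      obtain k j where kj: "p = (k,j)" by (cases p)
      have "k < j" using Kprop p(1) kj by auto
      moreover have "j \<in> J" using Kprop2 p(1) kj by auto
      ultimately show ?thesis using p(2) kj by auto
    next
      case False
      have gl: "(\<Sum>(k,j)\<in>K. gen Fm k j (y k j) l) = - (\<Sum>(k,j)\<in>K. if l = j then Fm k j (y k j) else 0)"
      proof -
        have "(\<Sum>(k,j)\<in>K. gen Fm k j (y k j) l) = (\<Sum>(k,j)\<in>K. - (if l = j then Fm k j (y k j) else 0))"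
        proof (rule sum.cong[OF refl], clarify)
          fix k j assume "(k,j) \<in> K"
          then have "k \<in> fst ` K" by (rule rev_image_eqI) simp
          then have "l \<noteq> k" using False by blast
          then show "gen Fm k j (y k j) l = - (if l = j then Fm k j (y k j) else 0)"
            by (simp add: gen_def)
        qed
        then show ?thesis by (simp add: sum_negf case_prod_unfold)
      qed
      show ?thesis
      proof (cases "l \<in> maxs J")
        case True
        have inj: "inj_on (\<lambda>(j,k). (k,j)) (SIGMA j:maxs J. Kj j)"
          by (auto simp: inj_on_def)
        have "(\<Sum>(k,j)\<in>K. if l = j then Fm k j (y k j) else 0)
            = (\<Sum>(j,k)\<in>(SIGMA j:maxs J. Kj j). if l = j then Fm k j (yj j k) else 0)"
          unfolding K_def y_def by (subst sum.reindex[OF inj]) (rule sum.cong; auto)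
        also have "\<dots> = (\<Sum>j\<in>maxs J. \<Sum>k\<in>Kj j. if l = j then Fm k j (yj j k) else 0)"
          using finmJ Kjfin by (subst sum.Sigma) auto
        also have "\<dots> = (\<Sum>j\<in>maxs J. if l = j then (\<Sum>k\<in>Kj j. Fm k j (yj j k)) else 0)"
          by (intro sum.cong) auto
        also have "\<dots> = x l" using True finmJ xj by simp
        finally have "x' l = 0" unfolding x'_def gl by simp
        then show ?thesis using l unfolding supp_def by simp
      next
        case False2: False
        have "(\<Sum>(k,j)\<in>K. if l = j then Fm k j (y k j) else 0) = 0"
        proof (rule sum.neutral, clarify)
          fix k j assume "(k,j) \<in> K"
          then have "j \<in> maxs J" using Kprop by auto
          then have "l \<noteq> j" using False2 by blast
          then show "(if l = j then Fm k j (y k j) else 0) = 0" by simp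
        qed
        then have "x' l = x l" unfolding x'_def gl by simp
        then have "l \<in> J" using l unfolding supp_def J_def by simp
        then show ?thesis using False2 unfolding maxs_def by blast
      qed
    qed
  qed
  show ?thesis
  proof (intro exI[of _ x'] conjI dsum' sum0 colim sl exI[of _ K] exI[of _ y] finK diff)
    show "\<forall>(k,j)\<in>K. j \<in> maxs (supp x) \<and> k < j \<and> y k j \<in> F k" using Kprop unfolding J_def .
  qed
qed


theorem lemma6p1:
  fixes s :: "'r::comm_ring_1 \<Rightarrow> 'm::ab_group_add \<Rightarrow> 'm"
    and F :: "'p::order \<Rightarrow> 'm set" and Fm :: "'p \<Rightarrow> 'p \<Rightarrow> 'm \<Rightarrow> 'm"
    and i :: 'p and x :: "'p \<Rightarrow> 'm"
  assumes dcc: "wf {(a, b). (a::'p) < b}"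
    and func: "is_functor s F Fm"
    and pp: "pseudo_projective F Fm i"
    and x: "dsum F i x"
    and x0: "(\<Sum>j\<in>supp x. Fm j i (x j)) = 0"
  shows "\<exists>xs :: nat \<Rightarrow> 'p \<Rightarrow> 'm. xs 0 = x \<and>
    (\<forall>n. dsum F i (xs n) \<and>
         (\<Sum>j\<in>supp (xs n). Fm j i (xs n j)) = 0 \<and>
         (\<exists>K y. finite K \<and>
            (\<forall>(k,j)\<in>K. j \<in> maxs (supp (xs n)) \<and> k < j \<and> y k j \<in> F k) \<and>
            (\<forall>l. xs (Suc n) l - xs n l = (\<Sum>(k,j)\<in>K. gen Fm k j (y k j) l))) \<and>
         colim_eq F Fm i (xs n) (xs (Suc n)) \<and>
         set_less (supp (xs (Suc n))) (supp (xs n))) \<and>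
    (\<exists>N>0. \<forall>n\<ge>N. \<forall>j. j < i \<longrightarrow> xs n j = 0)"
proof -
  define P where "P z \<longleftrightarrow> dsum F i z \<and> (\<Sum>j\<in>supp z. Fm j i (z j)) = 0" for z
  define Q where "Q z z' \<longleftrightarrow> dsum F i z' \<and> (\<Sum>j\<in>supp z'. Fm j i (z' j)) = 0 \<and>
     (\<exists>K y. finite K \<and>
            (\<forall>(k,j)\<in>K. j \<in> maxs (supp z) \<and> k < j \<and> y k j \<in> F k) \<and>
            (\<forall>l. z' l - z l = (\<Sum>(k,j)\<in>K. gen Fm k j (y k j) l))) \<and>
     colim_eq F Fm i z z' \<and> set_less (supp z') (supp z)" for z z'
  have "\<forall>z. \<exists>z'. P z \<longrightarrow> Q z z'"
  proof
    fix z show "\<exists>z'. P z \<longrightarrow> Q z z'"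
    proof (cases "P z")
      case True
      then have Pz: "dsum F i z" "(\<Sum>j\<in>supp z. Fm j i (z j)) = 0" unfolding P_def by auto
      have "\<exists>z'. Q z z'" unfolding Q_def by (rule step[OF func pp Pz])
      then show ?thesis by blast
    qed simp
  qed
  then have "\<exists>f. \<forall>z. P z \<longrightarrow> Q z (f z)" by (rule choice)
  then obtain f where fP: "\<forall>z. P z \<longrightarrow> Q z (f z)" ..
  define xs where "xs n = (f ^^ n) x" for n
  have xsS: "xs (Suc n) = f (xs n)" for n by (simp add: xs_def)
  have xs0: "xs 0 = x" by (simp add: xs_def)
  have Pn: "P (xs n)" for n
  proof (induction n)
    case 0 then show ?case using x x0 xs0 unfolding P_def by simp
  next
    case (Suc n)
    then have "Q (xs n) (xs (Suc n))" using fP xsS by simp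
    then show ?case unfolding P_def Q_def by simp
  qed
  have Qn: "Q (xs n) (xs (Suc n))" for n using fP Pn xsS by simp
  have fin: "finite (supp (xs n))" for n
    using Pn[of n] unfolding P_def dsum_def supp_def by simp
  have sl: "set_less (supp (xs (Suc n))) (supp (xs n))" for n
    using Qn[of n] unfolding Q_def by simp
  define r where "r = {(a::'p, b). a < b}"
  have "\<exists>n. supp (xs n) = {}"
  proof (rule ccontr)
    assume "\<not> (\<exists>n. supp (xs n) = {})"
    then have ne: "supp (xs n) \<noteq> {}" for n by simp
    have ch: "(mset_set (supp (xs (Suc n))), mset_set (supp (xs n))) \<in> mult r" for n
    proof -
      have "mset_set (supp (xs n)) \<noteq> {#}" using ne[of n] fin[of n] by (simp add: mset_set_empty_iff)
      moreover have "\<forall>k \<in> set_mset (mset_set (supp (xs (Suc n)))).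
          \<exists>j \<in> set_mset (mset_set (supp (xs n))). (k, j) \<in> r"
        using sl[of n] fin[of n] fin[of "Suc n"] unfolding set_less_def r_def by simp
      ultimately show ?thesis using one_step_implies_mult[of "mset_set (supp (xs n))"
          "mset_set (supp (xs (Suc n)))" r "{#}"] by simp
    qed
    moreover have "wf (mult r)" using wf_mult dcc unfolding r_def by blast
    moreover have "\<exists>f. \<forall>n. (f (Suc n), f n) \<in> mult r"
      by (rule exI[of _ "\<lambda>n. mset_set (supp (xs n))"]) (simp add: ch)
    ultimately show False unfolding wf_iff_no_infinite_down_chain by blast
  qed
  then obtain n0 where n0: "supp (xs n0) = {}" ..
  have zero: "supp (xs m) = {}" if "n0 \<le> m" for m
    using that
  proof (induction m rule: dec_induct)
    case base then show ?case using n0 .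
  next
    case (step m)
    then show ?case using sl[of m] unfolding set_less_def by auto
  qed
  show ?thesis
  proof (rule exI[of _ xs], rule conjI[OF xs0], rule conjI[OF allI])
    fix n
    show "dsum F i (xs n) \<and>
         (\<Sum>j\<in>supp (xs n). Fm j i (xs n j)) = 0 \<and>
         (\<exists>K y. finite K \<and>
            (\<forall>(k,j)\<in>K. j \<in> maxs (supp (xs n)) \<and> k < j \<and> y k j \<in> F k) \<and>
            (\<forall>l. xs (Suc n) l - xs n l = (\<Sum>(k,j)\<in>K. gen Fm k j (y k j) l))) \<and>
         colim_eq F Fm i (xs n) (xs (Suc n)) \<and>
         set_less (supp (xs (Suc n))) (supp (xs n))"
    proof -
      have A: "dsum F i (xs n) \<and> (\<Sum>j\<in>supp (xs n). Fm j i (xs n j)) = 0"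
        using Pn[of n] unfolding P_def .
      have B: "(\<exists>K y. finite K \<and>
            (\<forall>(k,j)\<in>K. j \<in> maxs (supp (xs n)) \<and> k < j \<and> y k j \<in> F k) \<and>
            (\<forall>l. xs (Suc n) l - xs n l = (\<Sum>(k,j)\<in>K. gen Fm k j (y k j) l))) \<and>
         colim_eq F Fm i (xs n) (xs (Suc n)) \<and>
         set_less (supp (xs (Suc n))) (supp (xs n))"
        using Qn[of n] unfolding Q_def by (elim conjE) (intro conjI)
      show ?thesis using A B by (simp only: simp_thms)
    qed
  next
    show "\<exists>N>0. \<forall>n\<ge>N. \<forall>j. j < i \<longrightarrow> xs n j = 0"
    proof (intro exI[of _ "Suc n0"] conjI allI impI)
      fix n j assume "Suc n0 \<le> n"
      then have "supp (xs n) = {}" using zero by simp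
      then show "xs n j = 0" unfolding supp_def by auto
    qed simp
  qed
qed

end
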